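(* Let $X$ be the vertex set of a connected simplicial graph with bounded geometry, equipped with the shortest path metric, which is $\delta$-hyperbolic, and fix $e\in X$ and $p\geq 1$. For $x\in X$, $k\in\mathbb{N}$, $n\in\mathbb{N}\setminus\{0\}$, let $F_{x,k,n}$ be the set of all points of $X\setminus B(e;3\delta)$ lying on $g([n,2n])$ for some geodesic $g$ from some $y$ with $d(x,y)\leq k$ to $e$ (parametrised by arc length starting at $y$), and let $F(x,k,n)\in\ell^p(X)$ be the characteristic function of $F_{x,k,n}$. Then there exists a constant $C$ such that for all $x\in X$, all $n\in\mathbb{N}\setminus\{0\}$ and all $k\leq \frac{n}{4}$, \[ \|F(x,k,n)\|_p^p\leq Cn, \] and if in addition $d(x,e)\geq 2n$, then $n-3\delta\leq \|F(x,k,n)\|_p^p$.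
   Context: Bounded geometry: for every $r$ there is a uniform bound on the cardinality of balls of radius $r$. $\delta$-hyperbolicity in the Rips sense: each side of a geodesic triangle lies in the $\delta$-neighbourhood of the union of the other two. *)

theory Defs
  imports "HOL-Analysis.Analysis"
begin

text \<open>A simplicial graph on the vertex type 'a, given by a symmetric irreflexive
  adjacency relation E. Its vertex set X is the whole type.\<close>

definition simple_graph :: "('a \<Rightarrow> 'a \<Rightarrow> bool) \<Rightarrow> bool" where
  "simple_graph E \<longleftrightarrow> (\<forall>x y. E x y \<longrightarrow> E y x) \<and> (\<forall>x. \<not> E x x)"

definition is_walk :: "('a \<Rightarrow> 'a \<Rightarrow> bool) \<Rightarrow> (nat \<Rightarrow> 'a) \<Rightarrow> nat \<Rightarrow> 'a \<Rightarrow> 'a \<Rightarrow> bool" where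
  "is_walk E w n x y \<longleftrightarrow> w 0 = x \<and> w n = y \<and> (\<forall>i<n. E (w i) (w (Suc i)))"

definition graph_connected :: "('a \<Rightarrow> 'a \<Rightarrow> bool) \<Rightarrow> bool" where
  "graph_connected E \<longleftrightarrow> (\<forall>x y. \<exists>w n. is_walk E w n x y)"

definition gdist :: "('a \<Rightarrow> 'a \<Rightarrow> bool) \<Rightarrow> 'a \<Rightarrow> 'a \<Rightarrow> nat" where
  "gdist E x y = (LEAST n. \<exists>w. is_walk E w n x y)"

definition bounded_geometry :: "('a \<Rightarrow> 'a \<Rightarrow> bool) \<Rightarrow> bool" where
  "bounded_geometry E \<longleftrightarrow>
     (\<forall>r::nat. \<exists>N::nat. \<forall>x. finite {y. gdist E x y \<le> r} \<and> card {y. gdist E x y \<le> r} \<le> N)"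

definition is_geodesic :: "('a \<Rightarrow> 'a \<Rightarrow> bool) \<Rightarrow> (nat \<Rightarrow> 'a) \<Rightarrow> 'a \<Rightarrow> 'a \<Rightarrow> bool" where
  "is_geodesic E g y z \<longleftrightarrow> g 0 = y \<and> g (gdist E y z) = z \<and>
     (\<forall>i \<le> gdist E y z. \<forall>j \<le> gdist E y z. gdist E (g i) (g j) = nat \<bar>int i - int j\<bar>)"

definition rips_hyperbolic :: "('a \<Rightarrow> 'a \<Rightarrow> bool) \<Rightarrow> real \<Rightarrow> bool" where
  "rips_hyperbolic E \<delta> \<longleftrightarrow>
     (\<forall>a b c g1 g2 g3. is_geodesic E g1 a b \<and> is_geodesic E g2 b c \<and> is_geodesic E g3 c a \<longrightarrow>
        (\<forall>i \<le> gdist E a b. \<exists>z.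
            ((\<exists>j \<le> gdist E b c. z = g2 j) \<or> (\<exists>j \<le> gdist E c a. z = g3 j)) \<and>
            real (gdist E (g1 i) z) \<le> \<delta>))"

definition Fset :: "('a \<Rightarrow> 'a \<Rightarrow> bool) \<Rightarrow> real \<Rightarrow> 'a \<Rightarrow> 'a \<Rightarrow> nat \<Rightarrow> nat \<Rightarrow> 'a set" where
  "Fset E \<delta> e x k n = {z. \<not> (real (gdist E e z) \<le> 3 * \<delta>) \<and>
      (\<exists>y g i. gdist E x y \<le> k \<and> is_geodesic E g y e \<and>
               n \<le> i \<and> i \<le> 2 * n \<and> i \<le> gdist E y e \<and> z = g i)}"

definition lp_norm_pow :: "real \<Rightarrow> ('a \<Rightarrow> real) \<Rightarrow> real" where
  "lp_norm_pow p f = (\<Sum>\<^sub>\<infinity>z. \<bar>f z\<bar> powr p)"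

end

theory Submission
  imports Defs
begin

lemma walk_gdist:
  assumes "graph_connected E"
  shows "\<exists>w. is_walk E w (gdist E x y) x y"
proof -
  from assms obtain w n where "is_walk E w n x y" unfolding graph_connected_def by blast
  then have "\<exists>n w. is_walk E w n x y" by blast
  then show ?thesis unfolding gdist_def by (rule LeastI_ex)
qed

lemma gdist_le: "is_walk E w n x y \<Longrightarrow> gdist E x y \<le> n"
  unfolding gdist_def by (rule Least_le) blast

lemma gdist_refl[simp]: "gdist E x x = 0"
proof -
  have "is_walk E (\<lambda>_. x) 0 x x" by (simp add: is_walk_def)
  from gdist_le[OF this] show ?thesis by simp
qed

lemma gdist_sym_le:
  assumes "simple_graph E" "graph_connected E"
  shows "gdist E y x \<le> gdist E x y"
proof -
  obtain w where w: "is_walk E w (gdist E x y) x y" using walk_gdist[OF assms(2)] by blast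
  define n where "n = gdist E x y"
  have "is_walk E (\<lambda>i. w (n - i)) n y x"
    unfolding is_walk_def
  proof (intro conjI allI impI)
    fix i assume i: "i < n"
    then have "E (w (n - Suc i)) (w (Suc (n - Suc i)))" using w unfolding is_walk_def n_def by auto
    moreover have "Suc (n - Suc i) = n - i" using i by simp
    ultimately show "E (w (n - i)) (w (n - Suc i))" using assms(1) unfolding simple_graph_def by metis
  qed (use w in \<open>auto simp: is_walk_def n_def\<close>)
  from gdist_le[OF this] show ?thesis by (simp add: n_def)
qed

lemma gdist_sym:
  assumes "simple_graph E" "graph_connected E"
  shows "gdist E y x = gdist E x y"
  using gdist_sym_le[OF assms, of x y] gdist_sym_le[OF assms, of y x] by simp

lemma gdist_triangle:
  assumes "graph_connected E"
  shows "gdist E x z \<le> gdist E x y + gdist E y z"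
proof -
  obtain w1 where w1: "is_walk E w1 (gdist E x y) x y" using walk_gdist[OF assms] by blast
  obtain w2 where w2: "is_walk E w2 (gdist E y z) y z" using walk_gdist[OF assms] by blast
  define n1 where "n1 = gdist E x y"
  define n2 where "n2 = gdist E y z"
  define w where "w i = (if i \<le> n1 then w1 i else w2 (i - n1))" for i
  have eq: "w i = w2 (i - n1)" if "i \<ge> n1" for i
    using that w1 w2 by (cases "i = n1") (auto simp: w_def is_walk_def n1_def)
  have "is_walk E w (n1 + n2) x z"
    unfolding is_walk_def
  proof (intro conjI allI impI)
    show "w 0 = x" using w1 by (simp add: w_def is_walk_def)
    show "w (n1 + n2) = z" using eq[of "n1+n2"] w2 by (simp add: is_walk_def n2_def)
    fix i assume i: "i < n1 + n2"
    show "E (w i) (w (Suc i))"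
    proof (cases "i < n1")
      case True then show ?thesis using w1 by (simp add: w_def is_walk_def n1_def)
    next
      case False
      then have "w i = w2 (i - n1)" "w (Suc i) = w2 (Suc (i - n1))" using eq[of i] eq[of "Suc i"]
        by (auto simp: Suc_diff_le)
      moreover have "i - n1 < n2" using i False by simp
      ultimately show ?thesis using w2 by (simp add: is_walk_def n2_def)
    qed
  qed
  from gdist_le[OF this] show ?thesis by (simp add: n1_def n2_def)
qed

lemma geodesic_exists:
  assumes "simple_graph E" "graph_connected E"
  shows "\<exists>g. is_geodesic E g x y"
proof -
  obtain w where w: "is_walk E w (gdist E x y) x y" using walk_gdist[OF assms(2)] by blast
  define D where "D = gdist E x y"
  have sub: "gdist E (w i) (w j) \<le> j - i" if "i \<le> j" "j \<le> D" for i j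
  proof -
    have "is_walk E (\<lambda>t. w (i + t)) (j - i) (w i) (w j)"
      using w that by (auto simp: is_walk_def D_def)
    from gdist_le[OF this] show ?thesis .
  qed
  have le: "gdist E (w i) (w j) = j - i" if "i \<le> j" "j \<le> D" for i j
  proof -
    have a: "gdist E x (w i) \<le> i"
      using sub[of 0 i] that w by (simp add: is_walk_def D_def)
    have b: "gdist E (w j) y \<le> D - j"
      using sub[of j D] that w by (simp add: is_walk_def D_def)
    have "D \<le> gdist E x (w i) + gdist E (w i) y"
      unfolding D_def by (rule gdist_triangle[OF assms(2)])
    also have "gdist E (w i) y \<le> gdist E (w i) (w j) + gdist E (w j) y"
      by (rule gdist_triangle[OF assms(2)])
    finally show ?thesis using a b sub[OF that] that by linarith
  qed
  have "is_geodesic E w x y"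
    unfolding is_geodesic_def
  proof (intro conjI allI impI)
    show "w 0 = x" "w (gdist E x y) = y" using w by (auto simp: is_walk_def)
    fix i j assume "i \<le> gdist E x y" "j \<le> gdist E x y"
    then show "gdist E (w i) (w j) = nat \<bar>int i - int j\<bar>"
      using le[of i j] le[of j i] gdist_sym[OF assms, of "w i" "w j"]
      by (cases "i \<le> j") (auto simp: D_def)
  qed
  then show ?thesis by blast
qed

lemma geod_start:
  assumes "is_geodesic E g y z" "i \<le> gdist E y z"
  shows "gdist E y (g i) = i"
  using assms unfolding is_geodesic_def by (metis diff_zero le0 nat_int of_nat_0 abs_minus_commute abs_of_nat nat_abs_int_diff)

lemma geod_end:
  assumes "is_geodesic E g y z" "i \<le> gdist E y z"
  shows "gdist E (g i) z = gdist E y z - i"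
  using assms unfolding is_geodesic_def by (metis order_refl nat_abs_int_diff)

context
  fixes E :: "'a \<Rightarrow> 'a \<Rightarrow> bool" and \<delta> :: real and e :: 'a
  assumes sg: "simple_graph E" and gc: "graph_connected E" and hyp: "rips_hyperbolic E \<delta>"
begin

lemma H: "is_geodesic E g1 a b \<Longrightarrow> is_geodesic E g2 b c \<Longrightarrow> is_geodesic E g3 c a \<Longrightarrow> i \<le> gdist E a b
  \<Longrightarrow> \<exists>z. ((\<exists>j \<le> gdist E b c. z = g2 j) \<or> (\<exists>j \<le> gdist E c a. z = g3 j)) \<and>
            real (gdist E (g1 i) z) \<le> \<delta>"
  using hyp unfolding rips_hyperbolic_def by blast

lemma delta_nonneg: "\<delta> \<ge> 0"
proof -
  have g: "is_geodesic E (\<lambda>_. e) e e" by (simp add: is_geodesic_def)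
  from H[OF g g g, of 0] show ?thesis by auto
qed

lemma F_sub_ball: "Fset E \<delta> e x k n \<subseteq> {z. gdist E x z \<le> k + 2*n}"
proof
  fix z assume "z \<in> Fset E \<delta> e x k n"
  then obtain y g i where "gdist E x y \<le> k" "is_geodesic E g y e" "i \<le> 2*n" "i \<le> gdist E y e" "z = g i"
    unfolding Fset_def by blast
  moreover have "gdist E x z \<le> gdist E x y + gdist E y z" by (rule gdist_triangle[OF gc])
  ultimately show "z \<in> {z. gdist E x z \<le> k + 2*n}" using geod_start[of E g y e i] by auto
qed

lemma nat_le_floor: "real (d::nat) \<le> (r::real) \<Longrightarrow> d \<le> nat \<lfloor>r\<rfloor>"
proof -
  assume "real d \<le> r"
  then have "int d \<le> \<lfloor>r\<rfloor>" by (simp add: le_floor_iff)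
  then show ?thesis by (metis nat_int nat_mono)
qed

lemma lower:
  assumes fin: "finite (Fset E \<delta> e x k n)" and D: "2*n \<le> gdist E x e"
  shows "real n - 3*\<delta> \<le> real (card (Fset E \<delta> e x k n))"
proof -
  obtain g0 where g0: "is_geodesic E g0 x e" using geodesic_exists[OF sg gc] by blast
  define Dx where "Dx = gdist E x e"
  define I where "I = {i. n \<le> i \<and> i \<le> 2*n \<and> \<not> real (Dx - i) \<le> 3*\<delta>}"
  have sub: "g0 ` I \<subseteq> Fset E \<delta> e x k n"
  proof
    fix z assume "z \<in> g0 ` I"
    then obtain i where i: "i \<in> I" "z = g0 i" by blast
    have iD: "i \<le> Dx" using i D by (auto simp: I_def Dx_def)
    have "gdist E e z = Dx - i"
      using geod_end[OF g0, of i] iD i gdist_sym[OF sg gc, of e z] by (simp add: Dx_def)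
    then show "z \<in> Fset E \<delta> e x k n"
    proof -
      have "\<not> real (gdist E e z) \<le> 3*\<delta>" using i(1) \<open>gdist E e z = Dx - i\<close> by (simp add: I_def)
      moreover have "n \<le> i \<and> i \<le> 2*n \<and> i \<le> gdist E x e" using i(1) iD by (simp add: I_def Dx_def)
      moreover have "gdist E x x \<le> k" by simp
      ultimately show ?thesis unfolding Fset_def using i(2) g0 by blast
    qed
  qed
  have inj: "inj_on g0 I"
  proof
    fix i j assume "i \<in> I" "j \<in> I" "g0 i = g0 j"
    moreover have "i \<le> Dx" "j \<le> Dx" using \<open>i \<in> I\<close> \<open>j \<in> I\<close> D by (auto simp: I_def Dx_def)
    moreover have "gdist E (g0 i) (g0 j) = nat \<bar>int i - int j\<bar>"
      using g0 \<open>i \<le> Dx\<close> \<open>j \<le> Dx\<close> unfolding is_geodesic_def Dx_def by blast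
    ultimately have "nat \<bar>int i - int j\<bar> = 0" by simp
    then show "i = j" by simp
  qed
  have cI: "card I \<le> card (Fset E \<delta> e x k n)"
    using card_inj_on_le[OF inj sub fin] .
  define t where "t = nat \<lfloor>3*\<delta>\<rfloor>"
  have t3: "real t \<le> 3*\<delta>" using delta_nonneg by (simp add: t_def)
  have cover: "{n..2*n} \<subseteq> I \<union> {Dx - t..2*n}"
  proof
    fix i assume i: "i \<in> {n..2*n}"
    show "i \<in> I \<union> {Dx - t..2*n}"
    proof (cases "i \<in> I")
      case False
      then have "real (Dx - i) \<le> 3*\<delta>" using i by (auto simp: I_def)
      then have "Dx - i \<le> t" unfolding t_def by (rule nat_le_floor)
      then show ?thesis using i by auto
    qed simp
  qed
  have "card {n..2*n} \<le> card I + card {Dx - t..2*n}"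
    using card_mono[OF _ cover] card_Un_le[of I "{Dx - t..2*n}"] by (auto simp: I_def)
  moreover have "card {Dx - t..2*n} \<le> t + 1" using D by (simp add: Dx_def)
  ultimately have "n + 1 \<le> card I + t + 1" by simp
  then have "real n \<le> real (card I) + real t" by linarith
  then show ?thesis using cI t3 by linarith
qed

lemma upper:
  fixes Nf :: "nat \<Rightarrow> nat"
  assumes finB: "\<And>r x. finite {y. gdist E x y \<le> r}" and cardB: "\<And>r x. card {y. gdist E x y \<le> r} \<le> Nf r"
    and kn: "4*k \<le> n" and n1: "1 \<le> n"
  shows "card (Fset E \<delta> e x k n) \<le> (Nf (4 * nat \<lfloor>\<delta>\<rfloor>) + (2 * nat \<lfloor>\<delta>\<rfloor> + 3) * Nf (nat \<lfloor>\<delta>\<rfloor>)) * n"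
proof -
  define c where "c = nat \<lfloor>\<delta>\<rfloor>"
  define F where "F = Fset E \<delta> e x k n"
  obtain h where h: "is_geodesic E h e x" using geodesic_exists[OF sg gc] by blast
  define Dx where "Dx = gdist E e x"
  define m :: int where "m = int Dx - 2*int n - int k - int c"
  define M :: int where "M = int n + 2*int k + 2*int c"
  define J where "J = {j::nat. m \<le> int j \<and> int j \<le> m + M}"
  have main: "z \<in> (\<Union>j\<in>J. {v. gdist E (h j) v \<le> c})" if z: "z \<in> F" and big: "k + c < n" for z
  proof -
    from z obtain y g i where y: "gdist E x y \<le> k" and g: "is_geodesic E g y e"
      and i: "n \<le> i" "i \<le> 2*n" "i \<le> gdist E y e" and zi: "z = g i"
      unfolding F_def Fset_def by blast
    obtain q where q: "is_geodesic E q x y" using geodesic_exists[OF sg gc] by blast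
    from H[OF g h q i(3)] obtain w where
      w: "(\<exists>j \<le> gdist E e x. w = h j) \<or> (\<exists>j \<le> gdist E x y. w = q j)"
      and wd: "real (gdist E (g i) w) \<le> \<delta>" by blast
    have wc: "gdist E z w \<le> c" using nat_le_floor[OF wd] zi c_def by simp
    have zy: "gdist E y z = i" using geod_start[OF g i(3)] zi by simp
    have ze: "gdist E z e + i = gdist E y e" using geod_end[OF g i(3)] zi i(3) by simp
    from w show ?thesis
    proof
      assume "\<exists>j \<le> gdist E x y. w = q j"
      then obtain j where j: "j \<le> gdist E x y" "w = q j" by blast
      have "gdist E w y = gdist E x y - j" using geod_end[OF q j(1)] j(2) by simp
      then have wy: "gdist E y w \<le> k" using y gdist_sym[OF sg gc, of y w] by simp
      have "gdist E y z \<le> gdist E y w + gdist E w z" by (rule gdist_triangle[OF gc])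
      moreover have "gdist E w z = gdist E z w" by (rule gdist_sym[OF sg gc])
      ultimately have "i \<le> k + c" using zy wy wc by linarith
      then show ?thesis using i big by linarith
    next
      assume "\<exists>j \<le> gdist E e x. w = h j"
      then obtain j where j: "j \<le> gdist E e x" "w = h j" by blast
      have ew: "gdist E e w = j" using geod_start[OF h j(1)] j(2) by simp
      have t1: "gdist E e w \<le> gdist E e z + gdist E z w" by (rule gdist_triangle[OF gc])
      have t2: "gdist E z e \<le> gdist E z w + gdist E w e" by (rule gdist_triangle[OF gc])
      have t3: "gdist E y e \<le> gdist E y x + gdist E x e" by (rule gdist_triangle[OF gc])
      have t4: "gdist E x e \<le> gdist E x y + gdist E y e" by (rule gdist_triangle[OF gc])
      have s1: "gdist E e z = gdist E z e" "gdist E w e = gdist E e w" "gdist E y x = gdist E x y"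
        "gdist E x e = Dx"
        using gdist_sym[OF sg gc] Dx_def by auto
      have A: "j + i \<le> gdist E y e + c" using ew t1 s1 ze wc by linarith
      have B: "gdist E y e \<le> c + j + i" using ew t2 s1 ze wc by linarith
      have C1: "gdist E y e \<le> k + Dx" using t3 s1 y by linarith
      have C2: "Dx \<le> k + gdist E y e" using t4 s1 y by linarith
      have "m \<le> int j \<and> int j \<le> m + M" unfolding m_def M_def using A B C1 C2 i by linarith
      then have "j \<in> J" by (simp add: J_def)
      moreover have "gdist E (h j) z \<le> c" using wc j(2) gdist_sym[OF sg gc, of z w] by simp
      ultimately show ?thesis by blast
    qed
  qed
  have finF: "finite F" unfolding F_def by (rule finite_subset[OF F_sub_ball finB])
  show ?thesis
  proof (cases "k + c < n")
    case True
    have sub: "F \<subseteq> (\<Union>j\<in>J. {v. gdist E (h j) v \<le> c})" using main True by blast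
    have injJ: "inj_on int J" by (simp add: inj_on_def)
    have imJ: "int ` J \<subseteq> {m..m+M}" by (auto simp: J_def)
    then have "finite (int ` J)" by (rule finite_subset) simp
    then have finJ: "finite J" using finite_imageD[OF _ injJ] by blast
    have "card J = card (int ` J)" using card_image[OF injJ] by simp
    also have "\<dots> \<le> card {m..m+M}" by (rule card_mono[OF _ imJ]) simp
    also have "\<dots> = nat (M + 1)" by simp
    finally have cJ: "card J \<le> n + 2*k + 2*c + 1" by (simp add: M_def nat_add_distrib)
    have "c \<le> c * n" using n1 by simp
    moreover have "(2*c+3)*n = 2*(c*n) + 3*n" by (simp add: algebra_simps)
    ultimately have "n + 2*k + 2*c + 1 \<le> (2*c+3)*n" using kn n1 by linarith
    with cJ have cJ2: "card J \<le> (2*c+3)*n" by linarith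
    have "card F \<le> card (\<Union>j\<in>J. {v. gdist E (h j) v \<le> c})"
      by (rule card_mono[OF _ sub]) (use finJ finB in blast)
    also have "\<dots> \<le> (\<Sum>j\<in>J. card {v. gdist E (h j) v \<le> c})" by (rule card_UN_le[OF finJ])
    also have "\<dots> \<le> card J * Nf c" using sum_bounded_above[of J "\<lambda>j. card {v. gdist E (h j) v \<le> c}" "Nf c"] cardB
      by simp
    also have "\<dots> \<le> (2*c+3)*n * Nf c" using cJ2 by (rule mult_le_mono1)
    also have "\<dots> \<le> (Nf (4*c) + (2*c+3) * Nf c) * n" by (simp add: algebra_simps)
    finally show ?thesis by (simp add: F_def c_def)
  next
    case False
    then have "k + 2*n \<le> 4*c" using kn by linarith
    then have "F \<subseteq> {z. gdist E x z \<le> 4*c}" using F_sub_ball[of x k n] unfolding F_def by auto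
    then have "card F \<le> card {z. gdist E x z \<le> 4*c}" by (rule card_mono[OF finB])
    also have "\<dots> \<le> Nf (4*c)" by (rule cardB)
    also have "\<dots> \<le> Nf (4*c) * n" using n1 by simp
    also have "\<dots> \<le> (Nf (4*c) + (2*c+3) * Nf c) * n" by (simp add: algebra_simps)
    finally show ?thesis by (simp add: F_def c_def)
  qed
qed

end


lemma norm_card:
  assumes "finite F" "p \<ge> 1"
  shows "lp_norm_pow p (indicator F :: 'a \<Rightarrow> real) = real (card F)"
proof -
  have "lp_norm_pow p (indicator F :: 'a \<Rightarrow> real) = infsum (\<lambda>z. 1::real) F"
    unfolding lp_norm_pow_def
    by (rule infsum_cong_neutral) (use assms in \<open>auto simp: indicator_def\<close>)
  also have "\<dots> = real (card F)" using assms by simp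
  finally show ?thesis .
qed

theorem lemma3p3:
  fixes E :: "'a \<Rightarrow> 'a \<Rightarrow> bool" and \<delta> p :: real and e :: 'a
  assumes "simple_graph E" and "graph_connected E" and "bounded_geometry E"
    and "rips_hyperbolic E \<delta>" and "p \<ge> 1"
  shows "\<exists>C::real. \<forall>x n k. n \<ge> 1 \<and> real k \<le> real n / 4 \<longrightarrow>
            lp_norm_pow p (indicator (Fset E \<delta> e x k n)) \<le> C * real n \<and>
            (gdist E x e \<ge> 2 * n \<longrightarrow>
               real n - 3 * \<delta> \<le> lp_norm_pow p (indicator (Fset E \<delta> e x k n)))"
proof -
  have "\<forall>r. \<exists>N. \<forall>x. finite {y. gdist E x y \<le> r} \<and> card {y. gdist E x y \<le> r} \<le> N"
    using assms(3) unfolding bounded_geometry_def by blast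
  from choice[OF this] obtain Nf where
    Nf: "\<forall>r x. finite {y. gdist E x y \<le> r} \<and> card {y. gdist E x y \<le> r} \<le> Nf r" by blast
  have finB: "\<And>r x. finite {y. gdist E x y \<le> r}" and cardB: "\<And>r x. card {y. gdist E x y \<le> r} \<le> Nf r"
    using Nf by auto
  define C where "C = Nf (4 * nat \<lfloor>\<delta>\<rfloor>) + (2 * nat \<lfloor>\<delta>\<rfloor> + 3) * Nf (nat \<lfloor>\<delta>\<rfloor>)"
  show ?thesis
  proof (intro exI[of _ "real C"] allI impI)
    fix x n k assume nk: "1 \<le> n \<and> real k \<le> real n / 4"
    then have kn: "4*k \<le> n" and n1: "1 \<le> n" by linarith+
    have fin: "finite (Fset E \<delta> e x k n)"
      by (rule finite_subset[OF F_sub_ball[OF assms(1,2,4)] finB])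
    have eq: "lp_norm_pow p (indicator (Fset E \<delta> e x k n)) = real (card (Fset E \<delta> e x k n))"
      by (rule norm_card[OF fin assms(5)])
    have "card (Fset E \<delta> e x k n) \<le> C * n"
      unfolding C_def by (rule upper[OF assms(1,2,4) finB cardB kn n1])
    then have "real (card (Fset E \<delta> e x k n)) \<le> real C * real n"
      by (metis of_nat_le_iff of_nat_mult)
    moreover have "2 * n \<le> gdist E x e \<longrightarrow> real n - 3 * \<delta> \<le> real (card (Fset E \<delta> e x k n))"
      using lower[OF assms(1,2,4) fin] by blast
    ultimately show "lp_norm_pow p (indicator (Fset E \<delta> e x k n)) \<le> real C * real n \<and>
            (gdist E x e \<ge> 2 * n \<longrightarrow>
               real n - 3 * \<delta> \<le> lp_norm_pow p (indicator (Fset E \<delta> e x k n)))"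
      using eq by simp
  qed
qed

end
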